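(* Let $\theta$ be a random variable with a continuous distribution, let $u(q,\theta)$ be a utility function, monotone increasing in $q$, with $\partial^2u(q,\theta)/\partial q^2=-1/d$ for all $(q,\theta)$, where $d>0$, and let the penalty be a quadratic function $\phi$ with $\phi(0)=\phi'(0)=0$, symmetric, and $\phi''(x)=1/\lambda$ for all $x$, where $\lambda>0$. Let $\pi_0>0$, $\pi_2>0$, $p\in(0,1)$. Define $q^a(\theta)=\arg\min_q\{\pi_0 q-u(q,\theta)\}$, $q^b(f,\theta)=\arg\min_q\{\pi_0 q-u(q,\theta)+\phi(f-q)\}$, $q^c(\theta)=\arg\min_q\{\pi_0 q-u(q,\theta)-\pi_2(f-q)\}$, $$H(f)=p\,\mathbb{E}_\theta[\pi_0 q^c-u(q^c,\theta)-\pi_2(f-q^c)]+(1-p)\,\mathbb{E}_\theta[\pi_0 q^b-u(q^b,\theta)+\phi(f-q^b)],$$ and let $f^*$ be the minimizer of $H$. Then the expected inflation of the baseline report is $$\mathbb{E}_\theta\,\delta f^*(p)=f^*-\mathbb{E}_\theta q^a(\theta)=(d+\lambda)\frac{p\,\pi_2}{1-p}.$$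
   Context: A consumer in a demand response program self-reports baseline $f$; with probability $p$ it is called and paid $\pi_2$ per unit of reduction $f-q$, otherwise it pays penalty $\phi(f-q)$. $\pi_0$ is the retail price; $q^a(\theta)$ is the consumption when not participating (the true baseline), and $\delta f^*(\theta)=f^*-q^a(\theta)$ is the baseline inflation. *)

theory Defs
  imports "HOL-Probability.Probability"
begin

definition qa :: "real \<Rightarrow> (real \<Rightarrow> real \<Rightarrow> real) \<Rightarrow> real \<Rightarrow> real" where
  "qa \<pi>0 u \<theta> = (ARG_MIN (\<lambda>q. \<pi>0 * q - u q \<theta>) q. True)"

definition qb :: "real \<Rightarrow> (real \<Rightarrow> real \<Rightarrow> real) \<Rightarrow> (real \<Rightarrow> real) \<Rightarrow> real \<Rightarrow> real \<Rightarrow> real" where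
  "qb \<pi>0 u \<phi> f \<theta> = (ARG_MIN (\<lambda>q. \<pi>0 * q - u q \<theta> + \<phi> (f - q)) q. True)"

definition qc :: "real \<Rightarrow> real \<Rightarrow> (real \<Rightarrow> real \<Rightarrow> real) \<Rightarrow> real \<Rightarrow> real \<Rightarrow> real" where
  "qc \<pi>0 \<pi>2 u f \<theta> = (ARG_MIN (\<lambda>q. \<pi>0 * q - u q \<theta> - \<pi>2 * (f - q)) q. True)"

definition H :: "real measure \<Rightarrow> real \<Rightarrow> real \<Rightarrow> real \<Rightarrow> (real \<Rightarrow> real \<Rightarrow> real)
    \<Rightarrow> (real \<Rightarrow> real) \<Rightarrow> real \<Rightarrow> real" where
  "H M p \<pi>0 \<pi>2 u \<phi> f =
     p * (\<integral>\<theta>. (let q = qc \<pi>0 \<pi>2 u f \<theta> in \<pi>0 * q - u q \<theta> - \<pi>2 * (f - q)) \<partial>M)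
   + (1 - p) * (\<integral>\<theta>. (let q = qb \<pi>0 u \<phi> f \<theta> in \<pi>0 * q - u q \<theta> + \<phi> (f - q)) \<partial>M)"

end

theory Submission
  imports Defs
begin

lemma argmin_quad:
  fixes F :: "real \<Rightarrow> real"
  assumes c: "c > 0" and F: "\<And>q. F q = K + c * (q - x)\<^sup>2"
  shows "(ARG_MIN F q. True) = x"
proof -
  have lt: "F x < F y" if "y \<noteq> x" for y
  proof -
    have "(y - x)\<^sup>2 > 0" using that by simp
    then show ?thesis using F c by simp
  qed
  have ia: "is_arg_min F (\<lambda>q. True) x"
    unfolding is_arg_min_def using lt by (metis less_asym)
  have un: "y = x" if "is_arg_min F (\<lambda>q. True) y" for y
    using that lt unfolding is_arg_min_def by blast
  show ?thesis unfolding arg_min_def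
    using ia un by (blast intro: someI2)
qed

lemma u_form:
  fixes u u' :: "real \<Rightarrow> real \<Rightarrow> real" and d :: real
  assumes d: "d > 0"
    and D1: "\<forall>\<theta> q. ((\<lambda>q. u q \<theta>) has_real_derivative u' q \<theta>) (at q)"
    and D2: "\<forall>\<theta> q. ((\<lambda>q. u' q \<theta>) has_real_derivative (- 1 / d)) (at q)"
  shows "u q \<theta> = u 0 \<theta> + u' 0 \<theta> * q - q\<^sup>2 / (2 * d)"
proof -
  have "\<forall>x. DERIV (\<lambda>q. u' q \<theta> + q / d) x :> 0"
  proof
    fix x
    have "DERIV (\<lambda>q. u' q \<theta> + q / d) x :> (- 1 / d + 1 / d)"
      using D2[rule_format, of \<theta> x] assms(1) by (auto intro!: derivative_eq_intros)
    then show "DERIV (\<lambda>q. u' q \<theta> + q / d) x :> 0" using d by simp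
  qed
  then have u': "u' q \<theta> = u' 0 \<theta> - q / d" for q
    using DERIV_isconst_all[of "\<lambda>q. u' q \<theta> + q / d" q 0] by simp
  have "\<forall>x. DERIV (\<lambda>q. u q \<theta> - u' 0 \<theta> * q + q\<^sup>2 / (2 * d)) x :> 0"
  proof
    fix x
    have "DERIV (\<lambda>q. u q \<theta> - u' 0 \<theta> * q + q\<^sup>2 / (2 * d)) x :> (u' x \<theta> - u' 0 \<theta> + 2 * x / (2 * d))"
      using D1[rule_format, of \<theta> x] assms(1) by (auto intro!: derivative_eq_intros)
    then show "DERIV (\<lambda>q. u q \<theta> - u' 0 \<theta> * q + q\<^sup>2 / (2 * d)) x :> 0"
      using u'[of x] d by simp
  qed
  then show ?thesis
    using DERIV_isconst_all[of "\<lambda>q. u q \<theta> - u' 0 \<theta> * q + q\<^sup>2 / (2 * d)" q 0] by simp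
qed

lemma phi_form:
  fixes \<phi> \<phi>' :: "real \<Rightarrow> real" and lam :: real
  assumes l: "lam > 0"
    and D1: "\<forall>x. (\<phi> has_real_derivative \<phi>' x) (at x)"
    and D2: "\<forall>x. (\<phi>' has_real_derivative (1 / lam)) (at x)"
    and z: "\<phi> 0 = 0" and z': "\<phi>' 0 = 0"
  shows "\<phi> x = x\<^sup>2 / (2 * lam)"
proof -
  have "\<forall>x. DERIV (\<lambda>q. \<phi>' q - q / lam) x :> 0"
  proof
    fix x
    have "DERIV (\<lambda>q. \<phi>' q - q / lam) x :> (1 / lam - 1 / lam)"
      using D2[rule_format, of x] assms(1) by (auto intro!: derivative_eq_intros)
    then show "DERIV (\<lambda>q. \<phi>' q - q / lam) x :> 0" using l by simp
  qed
  then have p': "\<phi>' q = q / lam" for q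
    using DERIV_isconst_all[of "\<lambda>q. \<phi>' q - q / lam" q 0] z' by simp
  have "\<forall>x. DERIV (\<lambda>q. \<phi> q - q\<^sup>2 / (2 * lam)) x :> 0"
  proof
    fix x
    have "DERIV (\<lambda>q. \<phi> q - q\<^sup>2 / (2 * lam)) x :> (\<phi>' x - 2 * x / (2 * lam))"
      using D1[rule_format, of x] assms(1) by (auto intro!: derivative_eq_intros)
    then show "DERIV (\<lambda>q. \<phi> q - q\<^sup>2 / (2 * lam)) x :> 0"
      using p' l by simp
  qed
  then show ?thesis
    using DERIV_isconst_all[of "\<lambda>q. \<phi> q - q\<^sup>2 / (2 * lam)" x 0] z by simp
qed

lemma qb_ident0:
  fixes d lam f q b u0 :: real
  assumes d: "d > 0" and l: "lam > 0"
  shows "(- b) * q - (u0 - q\<^sup>2 / (2 * d)) + (f - q)\<^sup>2 / (2 * lam) = - u0 - d * b\<^sup>2 / 2 + (f - d * b)\<^sup>2 / (2 * (d + lam))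
        + (d + lam) / (2 * d * lam) * (q - (d * lam * b + d * f) / (d + lam))\<^sup>2"
proof -
  have s: "d + lam > 0" "2 * d + 2 * lam \<noteq> 0" using d l by simp_all
  define x where "x = (d * lam * b + d * f) / (d + lam)"
  have xe: "(d + lam) * x = d * lam * b + d * f" unfolding x_def using s by simp
  have "2 * d * lam * (d + lam) * ((- b) * q - (u0 - q\<^sup>2 / (2 * d)) + (f - q)\<^sup>2 / (2 * lam))
      = 2 * d * lam * (d + lam) * (- u0 - d * b\<^sup>2 / 2 + (f - d * b)\<^sup>2 / (2 * (d + lam))
        + (d + lam) / (2 * d * lam) * (q - x)\<^sup>2)"
  proof -
    have L: "2 * d * lam * (d + lam) * ((- b) * q - (u0 - q\<^sup>2 / (2 * d)) + (f - q)\<^sup>2 / (2 * lam))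
       = 2 * d * lam * (d + lam) * ((- b) * q - u0) + lam * (d + lam) * q\<^sup>2 + d * (d + lam) * (f - q)\<^sup>2"
      using d l by (simp add: field_simps)
    have R: "2 * d * lam * (d + lam) * (- u0 - d * b\<^sup>2 / 2 + (f - d * b)\<^sup>2 / (2 * (d + lam))
        + (d + lam) / (2 * d * lam) * (q - x)\<^sup>2)
       = 2 * d * lam * (d + lam) * (- u0) - d * lam * (d + lam) * d * b\<^sup>2 + d * lam * (f - d * b)\<^sup>2
        + ((d + lam) * q - (d + lam) * x)\<^sup>2"
    proof -
      have r1: "2 * d * lam * (d + lam) * ((f - d * b)\<^sup>2 / (2 * (d + lam))) = d * lam * (f - d * b)\<^sup>2"
        using s by (simp add: field_simps)
      have r2: "2 * d * lam * (d + lam) * ((d + lam) / (2 * d * lam) * (q - x)\<^sup>2) = ((d + lam) * q - (d + lam) * x)\<^sup>2"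
      proof -
        have c: "2 * d * lam * (d + lam) * ((d + lam) / (2 * d * lam)) = (d + lam)\<^sup>2"
          using d l by (simp add: field_simps power2_eq_square)
        have "2 * d * lam * (d + lam) * ((d + lam) / (2 * d * lam) * (q - x)\<^sup>2)
            = (2 * d * lam * (d + lam) * ((d + lam) / (2 * d * lam))) * (q - x)\<^sup>2"
          by (simp only: mult.assoc)
        also have "\<dots> = ((d + lam) * (q - x))\<^sup>2" unfolding c by (simp add: power_mult_distrib)
        also have "\<dots> = ((d + lam) * q - (d + lam) * x)\<^sup>2" by (simp add: right_diff_distrib)
        finally show ?thesis .
      qed
      have dd: "\<And>D A B C E::real. D * (A - B + C + E) = D * A - D * B + D * C + D * E" by algebra
      show ?thesis unfolding dd r1 r2 by (simp add: algebra_simps)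
    qed
    show ?thesis unfolding L R xe by algebra
  qed
  then show ?thesis unfolding x_def[symmetric] using d l s by simp
qed

lemma qb_ident:
  fixes d lam f q a u0 \<pi>0 :: real
  assumes d: "d > 0" and l: "lam > 0"
  shows "\<pi>0 * q - (u0 + a * q - q\<^sup>2 / (2 * d)) + (f - q)\<^sup>2 / (2 * lam) = - u0 - d * (a - \<pi>0)\<^sup>2 / 2 + (f - d * (a - \<pi>0))\<^sup>2 / (2 * (d + lam))
        + (d + lam) / (2 * d * lam) * (q - (d * lam * (a - \<pi>0) + d * f) / (d + lam))\<^sup>2"
proof -
  have "\<pi>0 * q - (u0 + a * q - q\<^sup>2 / (2 * d)) = (- (a - \<pi>0)) * q - (u0 - q\<^sup>2 / (2 * d))"
    by (simp add: algebra_simps)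
  then show ?thesis using qb_ident0[OF d l, of "a - \<pi>0" q u0 f] by simp
qed

theorem theorem3:
  fixes M :: "real measure"
    and u u' :: "real \<Rightarrow> real \<Rightarrow> real"
    and \<phi> \<phi>' :: "real \<Rightarrow> real"
    and d lam \<pi>0 \<pi>2 p fstar :: real
  assumes "prob_space M"
    and "sets M = sets borel"
    and "\<forall>x. emeasure M {x} = 0"
    and "d > 0" and "lam > 0" and "\<pi>0 > 0" and "\<pi>2 > 0" and "0 < p" and "p < 1"
    and "\<forall>\<theta> q. ((\<lambda>q. u q \<theta>) has_real_derivative u' q \<theta>) (at q)"
    and "\<forall>\<theta> q. ((\<lambda>q. u' q \<theta>) has_real_derivative (- 1 / d)) (at q)"
    and "\<forall>x. (\<phi> has_real_derivative \<phi>' x) (at x)"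
    and "\<forall>x. (\<phi>' has_real_derivative (1 / lam)) (at x)"
    and "\<phi> 0 = 0" and "\<phi>' 0 = 0"
    and "\<forall>x. \<phi> (- x) = \<phi> x"
    and "integrable M (\<lambda>\<theta>. u 0 \<theta>)"
    and "integrable M (\<lambda>\<theta>. u' 0 \<theta>)"
    and "integrable M (\<lambda>\<theta>. (u' 0 \<theta>)\<^sup>2)"
    and "\<forall>f. H M p \<pi>0 \<pi>2 u \<phi> fstar \<le> H M p \<pi>0 \<pi>2 u \<phi> f"
  shows "fstar - (\<integral>\<theta>. qa \<pi>0 u \<theta> \<partial>M) = (d + lam) * (p * \<pi>2 / (1 - p))"
proof -
  interpret P: prob_space M by fact
  have d: "d > 0" and l: "lam > 0" by fact+
  define a where "a = (\<lambda>\<theta>. u' 0 \<theta>)"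
  define u0 where "u0 = (\<lambda>\<theta>. u 0 \<theta>)"
  have U: "u q \<theta> = u0 \<theta> + a \<theta> * q - q\<^sup>2 / (2 * d)" for q \<theta>
    unfolding a_def u0_def using u_form[OF d assms(10,11)] by blast
  have Phi: "\<phi> x = x\<^sup>2 / (2 * lam)" for x
    using phi_form[OF l assms(12-15)] by blast
  have ia: "integrable M a" and ia2: "integrable M (\<lambda>\<theta>. (a \<theta>)\<^sup>2)" and iu0: "integrable M u0"
    using assms(17-19) unfolding a_def u0_def by auto
  have QA: "qa \<pi>0 u \<theta> = d * (a \<theta> - \<pi>0)" for \<theta>
    unfolding qa_def
  proof (rule argmin_quad[where c = "1 / (2 * d)" and K = "- u0 \<theta> - d * (a \<theta> - \<pi>0)\<^sup>2 / 2"])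
    show "0 < 1 / (2 * d)" using d by simp
    fix q
    show "\<pi>0 * q - u q \<theta> = - u0 \<theta> - d * (a \<theta> - \<pi>0)\<^sup>2 / 2 + 1 / (2 * d) * (q - d * (a \<theta> - \<pi>0))\<^sup>2"
      unfolding U using d by (simp add: field_simps power2_eq_square)
  qed
  have QC: "qc \<pi>0 \<pi>2 u f \<theta> = d * (a \<theta> - \<pi>0 - \<pi>2)" for f \<theta>
    unfolding qc_def
  proof (rule argmin_quad[where c = "1 / (2 * d)" and K = "- u0 \<theta> - \<pi>2 * f - d * (a \<theta> - \<pi>0 - \<pi>2)\<^sup>2 / 2"])
    show "0 < 1 / (2 * d)" using d by simp
    fix q
    show "\<pi>0 * q - u q \<theta> - \<pi>2 * (f - q) = - u0 \<theta> - \<pi>2 * f - d * (a \<theta> - \<pi>0 - \<pi>2)\<^sup>2 / 2 + 1 / (2 * d) * (q - d * (a \<theta> - \<pi>0 - \<pi>2))\<^sup>2"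
      unfolding U using d by (simp add: field_simps power2_eq_square)
  qed
  have QB: "qb \<pi>0 u \<phi> f \<theta> = (d * lam * (a \<theta> - \<pi>0) + d * f) / (d + lam)" for f \<theta>
    unfolding qb_def
  proof (rule argmin_quad[where c = "(d + lam) / (2 * d * lam)" and
        K = "- u0 \<theta> - d * (a \<theta> - \<pi>0)\<^sup>2 / 2 + (f - d * (a \<theta> - \<pi>0))\<^sup>2 / (2 * (d + lam))"])
    show "0 < (d + lam) / (2 * d * lam)" using d l by simp
    fix q
    show "\<pi>0 * q - u q \<theta> + \<phi> (f - q) = - u0 \<theta> - d * (a \<theta> - \<pi>0)\<^sup>2 / 2 + (f - d * (a \<theta> - \<pi>0))\<^sup>2 / (2 * (d + lam))
        + (d + lam) / (2 * d * lam) * (q - (d * lam * (a \<theta> - \<pi>0) + d * f) / (d + lam))\<^sup>2"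
      unfolding U Phi using qb_ident[OF d l] by simp
  qed
  have pos: "d + lam > 0" using d l by simp
  define g1 where "g1 = (\<lambda>\<theta>. - u0 \<theta> - d * (a \<theta> - \<pi>0 - \<pi>2)\<^sup>2 / 2)"
  define g2 where "g2 = (\<lambda>\<theta>. - u0 \<theta> - d * (a \<theta> - \<pi>0)\<^sup>2 / 2 + (d * (a \<theta> - \<pi>0))\<^sup>2 / (2 * (d + lam)))"
  define h where "h = (\<lambda>\<theta>. d * (a \<theta> - \<pi>0))"
  have sq: "\<And>x c::real. (x - c)\<^sup>2 = x\<^sup>2 - 2 * c * x + c\<^sup>2" by (simp add: power2_eq_square algebra_simps)
  have g1e: "g1 = (\<lambda>\<theta>. - u0 \<theta> - (d / 2) * (a \<theta>)\<^sup>2 + (d * (\<pi>0 + \<pi>2)) * a \<theta> - d * (\<pi>0 + \<pi>2)\<^sup>2 / 2)"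
    unfolding g1_def by (rule ext) (simp add: power2_eq_square field_simps)
  have g2e: "g2 = (\<lambda>\<theta>. - u0 \<theta> + (d * d / (2 * (d + lam)) - d / 2) * ((a \<theta>)\<^sup>2 - 2 * \<pi>0 * a \<theta> + \<pi>0\<^sup>2))"
    unfolding g2_def by (rule ext) (simp add: power2_eq_square algebra_simps add_divide_distrib diff_divide_distrib)
  have ig1: "integrable M g1" unfolding g1e using ia ia2 iu0 by auto
  have ig2: "integrable M g2" unfolding g2e using ia ia2 iu0 by auto
  have ih: "integrable M h" unfolding h_def using ia by auto
  define Q where "Q = (\<integral>\<theta>. h \<theta> \<partial>M)"
  have EQA: "(\<integral>\<theta>. qa \<pi>0 u \<theta> \<partial>M) = Q" unfolding Q_def h_def QA by simp
  define C1 where "C1 = (\<integral>\<theta>. g1 \<theta> \<partial>M)"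
  define C2 where "C2 = (\<integral>\<theta>. g2 \<theta> \<partial>M)"
  have Hf: "H M p \<pi>0 \<pi>2 u \<phi> f = p * (C1 - \<pi>2 * f) + (1 - p) * (C2 - f * (Q / (d + lam)) + f\<^sup>2 / (2 * (d + lam)))" for f
  proof -
    have e1: "(\<lambda>\<theta>. let q = qc \<pi>0 \<pi>2 u f \<theta> in \<pi>0 * q - u q \<theta> - \<pi>2 * (f - q)) = (\<lambda>\<theta>. g1 \<theta> - \<pi>2 * f)"
      unfolding QC Let_def U g1_def using d by (intro ext) (simp add: field_simps power2_eq_square)
    have e2: "(\<lambda>\<theta>. let q = qb \<pi>0 u \<phi> f \<theta> in \<pi>0 * q - u q \<theta> + \<phi> (f - q))
        = (\<lambda>\<theta>. g2 \<theta> - f * (h \<theta> / (d + lam)) + f\<^sup>2 / (2 * (d + lam)))"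
    proof (rule ext)
      fix \<theta>
      have "(let q = qb \<pi>0 u \<phi> f \<theta> in \<pi>0 * q - u q \<theta> + \<phi> (f - q))
          = - u0 \<theta> - d * (a \<theta> - \<pi>0)\<^sup>2 / 2 + (f - d * (a \<theta> - \<pi>0))\<^sup>2 / (2 * (d + lam))"
      proof -
        define X where "X = (d * lam * (a \<theta> - \<pi>0) + d * f) / (d + lam)"
        have "\<pi>0 * X - u X \<theta> + \<phi> (f - X) = - u0 \<theta> - d * (a \<theta> - \<pi>0)\<^sup>2 / 2 + (f - d * (a \<theta> - \<pi>0))\<^sup>2 / (2 * (d + lam))
          + (d + lam) / (2 * d * lam) * (X - X)\<^sup>2"
          unfolding U Phi X_def by (rule qb_ident[OF d l])
        then show ?thesis unfolding QB Let_def X_def by simp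
      qed
      also have "\<dots> = g2 \<theta> - f * (h \<theta> / (d + lam)) + f\<^sup>2 / (2 * (d + lam))"
      proof -
        have gen: "\<And>y s. s > 0 \<Longrightarrow> (f - y)\<^sup>2 / (2 * s) = y\<^sup>2 / (2 * s) - f * (y / s) + f\<^sup>2 / (2 * s)"
        proof -
          fix y s :: real assume "s > 0"
          then show "(f - y)\<^sup>2 / (2 * s) = y\<^sup>2 / (2 * s) - f * (y / s) + f\<^sup>2 / (2 * s)"
            by (simp add: field_simps power2_eq_square)
        qed
        show ?thesis unfolding g2_def h_def gen[OF pos] by simp
      qed
      finally show "(let q = qb \<pi>0 u \<phi> f \<theta> in \<pi>0 * q - u q \<theta> + \<phi> (f - q))
          = g2 \<theta> - f * (h \<theta> / (d + lam)) + f\<^sup>2 / (2 * (d + lam))" .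
    qed
    have i1: "(\<integral>\<theta>. g1 \<theta> - \<pi>2 * f \<partial>M) = C1 - \<pi>2 * f"
      unfolding C1_def using ig1 by (simp add: P.prob_space)
    have i2: "(\<integral>\<theta>. g2 \<theta> - f * (h \<theta> / (d + lam)) + f\<^sup>2 / (2 * (d + lam)) \<partial>M)
        = C2 - f * (Q / (d + lam)) + f\<^sup>2 / (2 * (d + lam))"
      unfolding C2_def Q_def using ig2 ih by (simp add: P.prob_space)
    show ?thesis unfolding H_def e1 e2 i1 i2 ..
  qed
  define A where "A = (1 - p) / (2 * (d + lam))"
  define B where "B = - p * \<pi>2 - (1 - p) * (Q / (d + lam))"
  define K where "K = p * C1 + (1 - p) * C2"
  have Hq: "H M p \<pi>0 \<pi>2 u \<phi> f = K + B * f + A * f\<^sup>2" for f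
    unfolding Hf A_def B_def K_def by (simp add: algebra_simps)
  have A0: "A > 0" unfolding A_def using pos assms(9) by simp
  define f0 where "f0 = - B / (2 * A)"
  have "K + B * fstar + A * fstar\<^sup>2 \<le> K + B * f0 + A * f0\<^sup>2"
    using assms(20) Hq by metis
  moreover have "A * (fstar - f0)\<^sup>2 = (B * fstar + A * fstar\<^sup>2) - (B * f0 + A * f0\<^sup>2)"
    unfolding f0_def using A0 by (simp add: field_simps power2_eq_square)
  ultimately have "A * (fstar - f0)\<^sup>2 \<le> 0" by simp
  then have "(fstar - f0)\<^sup>2 \<le> 0" using A0 by (simp add: mult_le_0_iff)
  then have fs: "fstar = f0" by simp
  have gen: "\<And>s r. s > 0 \<Longrightarrow> r > 0 \<Longrightarrow> - (- p * \<pi>2 - r * (Q / s)) / (2 * (r / (2 * s))) - Q = s * (p * \<pi>2 / r)"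
  proof -
    fix s r :: real assume "s > 0" "r > 0"
    then show "- (- p * \<pi>2 - r * (Q / s)) / (2 * (r / (2 * s))) - Q = s * (p * \<pi>2 / r)"
      by (simp add: field_simps)
  qed
  have "1 - p > 0" using assms(9) by simp
  show ?thesis unfolding EQA fs f0_def A_def B_def using gen[OF pos \<open>1 - p > 0\<close>] .
qed

end
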